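(* Let $\alpha$ be a parameter, $\lambda\in\mathbb{C}$, and let $n_1'>\dots>n_{p}'\ge0$ and $m_1'>\dots>m_{q}'\ge0$ be integers; put $r=p+q$. Consider $$G(x,\lambda)=e^{-px}x^{\alpha(r+1)}\,\mathrm{Wr}\left[x^{-\alpha}L^{-\alpha}_{m_1'}(x),\dots,x^{-\alpha}L^{-\alpha}_{m_q'}(x),e^xx^{-\alpha}L^{-\alpha}_{n_1'}(-x),\dots,e^xx^{-\alpha}L^{-\alpha}_{n_p'}(-x),x^{-\alpha}M(-\lambda-\alpha,1-\alpha,x)\right].$$ Let $\mathbf{s}$ be the smallest positive integer with $n_i'<r$ for all $i\ge\mathbf{s}$ and $n_i'\ge r$ for all $i<\mathbf{s}$ ($\mathbf{s}=p+1$ if none exists), and $\mathbf{s}'$ the smallest positive integer with $m_j'<r$ for all $j\ge\mathbf{s}'$ and $m_j'\ge r$ for all $j<\mathbf{s}'$ ($\mathbf{s}'=q+1$ if none exists). Then, up to a factor $\pm1$, $G(0,\lambda)$ equals $$\frac{\prod_{k=1}^{r+1}(-\alpha+k)^{(r+1-k)}\prod_{j=1}^{\mathbf{s}'-1}(-\alpha+r+1)^{(m_j'-r)}\prod_{i=1}^{\mathbf{s}-1}(-\alpha+r+1)^{(n_i'-r)}\;\Delta\big(-m_q',\dots,-m_1',-\alpha+1+n_1',\dots,-\alpha+1+n_p',-\lambda-\alpha\big)}{(1-\alpha)^{(r)}\prod_{j=\mathbf{s}'}^{q}(-\alpha+1+m_j')^{(r-m_j')}\prod_{i=\mathbf{s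}}^{p}(-\alpha+1+n_i')^{(r-n_i')}\prod_{j=1}^{q}m_j'!\prod_{i=1}^{p}n_i'!}.$$
   Context: $L_n^{\beta}$ is the classical Laguerre polynomial and $M(a,b,x)={}_1F_1(a;b;x)$; $\mathrm{Wr}$ is the Wronskian; $G(0,\lambda)$ denotes the value at $x=0$ of the function $G$ (which is analytic at $0$ after the cancellations of powers of $x$). Rising factorial $a^{(n)}=a(a+1)\cdots(a+n-1)$, $a^{(0)}=1$; Vandermonde $\Delta(a_1,\dots,a_k)=\prod_{i<j}(a_j-a_i)$. In the paper's notation $G(x,\lambda)=\Omega_{\mu',\nu'}[\widetilde h^{\alpha}(x,\lambda)]$, the Darboux-transformed second solution associated with the conjugate canonical Maya diagrams $(n_1',\dots,n_p'\,|\,\emptyset)$ and $(m_1',\dots,m_q'\,|\,\emptyset)$. The paper ignores overall factors $(-1)^d$. *)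

theory Defs
  imports "HOL-Analysis.Analysis" "HOL-Combinatorics.Permutations"
begin

text \<open>Classical Laguerre polynomial with complex parameter:
  L_n^b(x) = sum_{k=0}^n binom(n+b, n-k) (-x)^k / k!,
  where binom(n+b, n-k) = (b+k+1)^{(n-k)} / (n-k)!.\<close>
definition laguerre :: "nat \<Rightarrow> complex \<Rightarrow> complex \<Rightarrow> complex" where
  "laguerre n b x =
     (\<Sum>k\<le>n. pochhammer (b + of_nat k + 1) (n - k) / fact (n - k) * (- x) ^ k / fact k)"

definition kummerM :: "complex \<Rightarrow> complex \<Rightarrow> complex \<Rightarrow> complex" where
  "kummerM a b x = (\<Sum>k. pochhammer a k / pochhammer b k * x ^ k / fact k)"

definition wronskian :: "(complex \<Rightarrow> complex) list \<Rightarrow> complex \<Rightarrow> complex" where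
  "wronskian fs x =
     (\<Sum>\<sigma> | \<sigma> permutes {..<length fs}.
        of_int (sign \<sigma>) * (\<Prod>i<length fs. (deriv ^^ i) (fs ! \<sigma> i) x))"

definition vandermonde :: "complex list \<Rightarrow> complex" where
  "vandermonde as = (\<Prod>j<length as. \<Prod>i<j. (as ! j - as ! i))"

text \<open>The function G(x,lambda); ns = [n_1',...,n_p'], ms = [m_1',...,m_q'].\<close>
definition G_fun :: "real \<Rightarrow> complex \<Rightarrow> nat list \<Rightarrow> nat list \<Rightarrow> complex \<Rightarrow> complex" where
  "G_fun \<alpha> lam ns ms x =
     (let a = complex_of_real \<alpha>; p = length ns; q = length ms; r = p + q in
      exp (- of_nat p * x) * x powr (a * of_nat (r + 1)) *
      wronskian
        (map (\<lambda>m. (\<lambda>y. y powr (- a) * laguerre m (- a) y)) ms @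
         map (\<lambda>n. (\<lambda>y. exp y * y powr (- a) * laguerre n (- a) (- y))) ns @
         [(\<lambda>y. y powr (- a) * kummerM (- lam - a) (1 - a) y)]) x)"

definition split_idx :: "nat list \<Rightarrow> nat \<Rightarrow> nat" where
  "split_idx ns r =
     (if \<exists>s. 1 \<le> s \<and> (\<forall>i\<in>{s..length ns}. ns ! (i - 1) < r) \<and> (\<forall>i\<in>{1..<s}. ns ! (i - 1) \<ge> r)
      then (LEAST s. 1 \<le> s \<and> (\<forall>i\<in>{s..length ns}. ns ! (i - 1) < r) \<and> (\<forall>i\<in>{1..<s}. ns ! (i - 1) \<ge> r))
      else length ns + 1)"

definition G0_formula :: "real \<Rightarrow> complex \<Rightarrow> nat list \<Rightarrow> nat list \<Rightarrow> complex" where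
  "G0_formula \<alpha> lam ns ms =
     (let a = complex_of_real \<alpha>; p = length ns; q = length ms; r = p + q;
          s = split_idx ns r; s' = split_idx ms r in
      ((\<Prod>k=1..r+1. pochhammer (- a + of_nat k) (r + 1 - k)) *
       (\<Prod>j=1..s'-1. pochhammer (- a + of_nat r + 1) (ms ! (j - 1) - r)) *
       (\<Prod>i=1..s-1. pochhammer (- a + of_nat r + 1) (ns ! (i - 1) - r)) *
       vandermonde (map (\<lambda>m. - of_nat m) (rev ms) @
                    map (\<lambda>n. - a + 1 + of_nat n) ns @ [- lam - a]))
      /
      (pochhammer (1 - a) r *
       (\<Prod>j=s'..q. pochhammer (- a + 1 + of_nat (ms ! (j - 1))) (r - ms ! (j - 1))) *
       (\<Prod>i=s..p. pochhammer (- a + 1 + of_nat (ns ! (i - 1))) (r - ns ! (i - 1))) *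
       (\<Prod>j<q. fact (ms ! j)) * (\<Prod>i<p. fact (ns ! i))))"

end

theory Submission
  imports Defs "Jordan_Normal_Form.Determinant" "HOL-Complex_Analysis.Complex_Analysis"
begin

lemma wronskian_det:
  "wronskian fs x = det (mat (length fs) (length fs) (\<lambda>(i,j). (deriv ^^ i) (fs ! j) x))"
proof -
  let ?n = "length fs"
  have "det (mat ?n ?n (\<lambda>(i,j). (deriv ^^ i) (fs ! j) x)) =
    (\<Sum>p \<in> {p. p permutes {0..<?n}}. of_int (sign p) * (\<Prod>i=0..<?n. mat ?n ?n (\<lambda>(i,j). (deriv ^^ i) (fs ! j) x) $$ (i, p i)))"
    by (rule det_def') auto
  also have "\<dots> = wronskian fs x"
    unfolding wronskian_def atLeast0LessThan
    apply (rule sum.cong, simp)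
    apply (rule arg_cong2[where f="(*)"], simp)
    apply (rule prod.cong, simp)
    using permutes_in_image by fastforce
  finally show ?thesis by simp
qed

lemma det_scale:
  fixes A :: "nat \<Rightarrow> nat \<Rightarrow> 'a::comm_ring_1"
  shows "det (mat n n (\<lambda>(i,j). r i * s j * A i j)) =
    (\<Prod>i<n. r i) * (\<Prod>j<n. s j) * det (mat n n (\<lambda>(i,j). A i j))"
proof -
  have "det (mat n n (\<lambda>(i,j). r i * s j * A i j)) =
    (\<Sum>p \<in> {p. p permutes {0..<n}}. of_int (sign p) * (\<Prod>i=0..<n. mat n n (\<lambda>(i,j). r i * s j * A i j) $$ (i, p i)))"
    by (rule det_def') auto
  also have "\<dots> = (\<Sum>p \<in> {p. p permutes {0..<n}}. (\<Prod>i<n. r i) * (\<Prod>j<n. s j) * (of_int (sign p) * (\<Prod>i=0..<n. mat n n (\<lambda>(i,j). A i j) $$ (i, p i))))"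
  proof (rule sum.cong, simp)
    fix p assume "p \<in> {p. p permutes {0..<n}}"
    hence p: "p permutes {0..<n}" by simp
    have "(\<Prod>i=0..<n. mat n n (\<lambda>(i,j). r i * s j * A i j) $$ (i, p i)) =
          (\<Prod>i=0..<n. r i * s (p i) * A i (p i))"
      by (rule prod.cong, simp) (use permutes_in_image[OF p] in auto)
    also have "\<dots> = (\<Prod>i=0..<n. r i) * (\<Prod>i=0..<n. s (p i)) * (\<Prod>i=0..<n. A i (p i))"
      by (simp add: prod.distrib)
    also have "(\<Prod>i=0..<n. s (p i)) = (\<Prod>i=0..<n. s i)"
      using prod.permute[OF p, of s] by (simp add: comp_def)
    also have "(\<Prod>i=0..<n. A i (p i)) = (\<Prod>i=0..<n. mat n n (\<lambda>(i,j). A i j) $$ (i, p i))"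
      by (rule prod.cong, simp) (use permutes_in_image[OF p] in auto)
    finally show "of_int (sign p) * (\<Prod>i=0..<n. mat n n (\<lambda>(i,j). r i * s j * A i j) $$ (i, p i)) =
      (\<Prod>i<n. r i) * (\<Prod>j<n. s j) * (of_int (sign p) * (\<Prod>i=0..<n. mat n n (\<lambda>(i,j). A i j) $$ (i, p i)))"
      by (simp add: atLeast0LessThan ac_simps)
  qed
  also have "\<dots> = (\<Prod>i<n. r i) * (\<Prod>j<n. s j) * det (mat n n (\<lambda>(i,j). A i j))"
    by (subst det_def'[of _ n]) (auto simp: sum_distrib_left)
  finally show ?thesis .
qed

lemma det_lower_mult:
  fixes A L :: "nat \<Rightarrow> nat \<Rightarrow> 'a::comm_ring_1"
  shows "det (mat n n (\<lambda>(i,j). \<Sum>l\<le>i. L i l * A l j)) =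
    (\<Prod>i<n. L i i) * det (mat n n (\<lambda>(i,j). A i j))"
proof -
  define L' where "L' = mat n n (\<lambda>(i,l). if l \<le> i then L i l else 0)"
  define A' where "A' = mat n n (\<lambda>(i,j). A i j)"
  have L'c: "L' \<in> carrier_mat n n" and A'c: "A' \<in> carrier_mat n n"
    unfolding L'_def A'_def by auto
  have prodeq: "L' * A' = mat n n (\<lambda>(i,j). \<Sum>l\<le>i. L i l * A l j)"
  proof (rule eq_matI)
    fix i j assume ij: "i < dim_row (mat n n (\<lambda>(i,j). \<Sum>l\<le>i. L i l * A l j))"
      "j < dim_col (mat n n (\<lambda>(i,j). \<Sum>l\<le>i. L i l * A l j))"
    hence i: "i < n" and j: "j < n" by auto
    have "(L' * A') $$ (i,j) = (\<Sum>l=0..<n. (if l \<le> i then L i l else 0) * A l j)"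
      using i j unfolding L'_def A'_def
      by (simp add: scalar_prod_def row_def col_def)
    also have "\<dots> = (\<Sum>l\<in>{0..<n}. if l \<in> {..i} then L i l * A l j else 0)"
      by (rule sum.cong) auto
    also have "\<dots> = (\<Sum>l\<in>{0..<n} \<inter> {..i}. L i l * A l j)"
      by (rule sum.inter_restrict[symmetric]) simp
    also have "{0..<n} \<inter> {..i} = {..i}" using i by auto
    finally show "(L' * A') $$ (i,j) = mat n n (\<lambda>(i,j). \<Sum>l\<le>i. L i l * A l j) $$ (i,j)"
      using i j by simp
  qed (auto simp: L'_def A'_def)
  have "det L' = prod_list (diag_mat L')"
    by (rule det_lower_triangular[OF _ L'c]) (auto simp: L'_def)
  also have "\<dots> = (\<Prod>i<n. L i i)"
    unfolding L'_def prod_list_diag_prod by (simp add: atLeast0LessThan)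
  finally have dL: "det L' = (\<Prod>i<n. L i i)" .
  show ?thesis
    using det_mult[OF L'c A'c] prodeq dL A'_def by simp
qed

lemma vprod_Suc:
  fixes c :: "nat \<Rightarrow> 'a::comm_ring_1"
  shows "(\<Prod>j<Suc n. \<Prod>i<j. (c j - c i)) =
    (\<Prod>j<n. (c (Suc j) - c 0)) * (\<Prod>j<n. \<Prod>i<j. (c (Suc j) - c (Suc i)))"
  by (simp add: prod.lessThan_Suc_shift[where n=n] prod.lessThan_Suc_shift[where g="\<lambda>i. c (Suc _) - c i"] prod.distrib del: prod.lessThan_Suc)

lemma det_poch_vandermonde:
  fixes c :: "nat \<Rightarrow> 'a::comm_ring_1"
  shows "det (mat n n (\<lambda>(i,j). pochhammer (c j) i)) = (\<Prod>j<n. \<Prod>i<j. (c j - c i))"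
proof (induction n arbitrary: c)
  case 0
  then show ?case by (simp add: det_dim_zero)
next
  case (Suc n)
  define Lm where "Lm i l = (if l = i then 1 else if Suc l = i then - (c 0 + of_nat l) else (0::'a))" for i l
  define B where "B i j = (if i = 0 then 1 else (c j - c 0) * pochhammer (c j) (i - 1))" for i j
  have "det (mat (Suc n) (Suc n) (\<lambda>(i,j). \<Sum>l\<le>i. Lm i l * pochhammer (c j) l)) =
    (\<Prod>i<Suc n. Lm i i) * det (mat (Suc n) (Suc n) (\<lambda>(i,j). pochhammer (c j) i))"
    by (rule det_lower_mult)
  also have "(\<Prod>i<Suc n. Lm i i) = 1" by (simp add: Lm_def)
  finally have s1: "det (mat (Suc n) (Suc n) (\<lambda>(i,j). pochhammer (c j) i)) =
     det (mat (Suc n) (Suc n) (\<lambda>(i,j). \<Sum>l\<le>i. Lm i l * pochhammer (c j) l))" by simp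
  have ent: "(\<Sum>l\<le>i. Lm i l * pochhammer (c j) l) = B i j" for i j
  proof (cases i)
    case 0
    then show ?thesis by (simp add: Lm_def B_def)
  next
    case (Suc i')
    have z: "(\<Sum>l<i'. Lm (Suc i') l * pochhammer (c j) l) = 0"
      by (rule sum.neutral) (auto simp: Lm_def)
    have "(\<Sum>l\<le>i. Lm i l * pochhammer (c j) l) =
       (\<Sum>l<i'. Lm (Suc i') l * pochhammer (c j) l) + Lm (Suc i') i' * pochhammer (c j) i'
        + Lm (Suc i') (Suc i') * pochhammer (c j) (Suc i')"
      unfolding Suc by (simp add: lessThan_Suc_atMost[symmetric])
    also have "\<dots> = - (c 0 + of_nat i') * pochhammer (c j) i' + pochhammer (c j) i' * (c j + of_nat i')"
      using z by (simp add: Lm_def pochhammer_Suc)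
    also have "\<dots> = B i j" by (simp add: B_def Suc algebra_simps)
    finally show ?thesis .
  qed
  have s2: "mat (Suc n) (Suc n) (\<lambda>(i,j). \<Sum>l\<le>i. Lm i l * pochhammer (c j) l) =
     mat (Suc n) (Suc n) (\<lambda>(i,j). B i j)"
    by (rule eq_matI) (auto simp: ent)
  let ?B = "mat (Suc n) (Suc n) (\<lambda>(i,j). B i j)"
  have Bc: "?B \<in> carrier_mat (Suc n) (Suc n)" by auto
  have "det ?B = (\<Sum>i<Suc n. ?B $$ (i,0) * cofactor ?B i 0)"
    by (rule laplace_expansion_column[OF Bc]) simp
  also have "\<dots> = ?B $$ (0,0) * cofactor ?B 0 0 + (\<Sum>i<n. ?B $$ (Suc i,0) * cofactor ?B (Suc i) 0)"
    by (rule sum.lessThan_Suc_shift)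
  also have "(\<Sum>i<n. ?B $$ (Suc i,0) * cofactor ?B (Suc i) 0) = 0"
    by (rule sum.neutral) (auto simp: B_def)
  also have "?B $$ (0,0) * cofactor ?B 0 0 = det (mat_delete ?B 0 0)"
    by (simp add: B_def cofactor_def)
  also have "mat_delete ?B 0 0 = mat n n (\<lambda>(i,j). 1 * (c (Suc j) - c 0) * pochhammer (c (Suc j)) i)"
    by (rule eq_matI) (auto simp: mat_delete_def B_def)
  also have "det \<dots> = (\<Prod>i<n. 1) * (\<Prod>j<n. (c (Suc j) - c 0)) * det (mat n n (\<lambda>(i,j). pochhammer (c (Suc j)) i))"
    by (rule det_scale)
  also have "det (mat n n (\<lambda>(i,j). pochhammer (c (Suc j)) i)) = (\<Prod>j<n. \<Prod>i<j. (c (Suc j) - c (Suc i)))"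
    using Suc.IH[of "\<lambda>j. c (Suc j)"] by simp
  finally show ?case using s1 s2 vprod_Suc[of c n] by simp
qed

lemma wronskian_mult:
  assumes S: "open S" "x \<in> S" and g: "g holomorphic_on S"
    and fs: "\<forall>f\<in>set fs. f holomorphic_on S"
  shows "wronskian (map (\<lambda>f y. g y * f y) fs) x = g x ^ length fs * wronskian fs x"
proof -
  let ?n = "length fs"
  define Lg where "Lg i l = of_nat (i choose l) * (deriv ^^ (i - l)) g x" for i l
  define Bm where "Bm l j = (deriv ^^ l) (fs ! j) x" for l j
  have ent: "(deriv ^^ i) (\<lambda>y. g y * (fs ! j) y) x = (\<Sum>l\<le>i. Lg i l * Bm l j)"
    if j: "j < ?n" for i j
  proof -
    have fj: "fs ! j holomorphic_on S" using fs j by auto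
    have "(deriv ^^ i) (\<lambda>y. g y * (fs ! j) y) x = (deriv ^^ i) (\<lambda>y. (fs ! j) y * g y) x"
      using j by (simp add: mult.commute)
    also have "\<dots> = (\<Sum>l = 0..i. of_nat (i choose l) * (deriv ^^ l) (fs ! j) x * (deriv ^^ (i - l)) g x)"
      by (rule higher_deriv_mult[OF fj g S])
    also have "\<dots> = (\<Sum>l\<le>i. Lg i l * Bm l j)"
      by (simp add: Lg_def Bm_def atLeast0AtMost ac_simps)
    finally show ?thesis .
  qed
  have "wronskian (map (\<lambda>f y. g y * f y) fs) x =
      det (mat ?n ?n (\<lambda>(i,j). (deriv ^^ i) (map (\<lambda>f y. g y * f y) fs ! j) x))"
    using wronskian_det[of "map (\<lambda>f y. g y * f y) fs" x] by simp
  also have "mat ?n ?n (\<lambda>(i,j). (deriv ^^ i) (map (\<lambda>f y. g y * f y) fs ! j) x) =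
     mat ?n ?n (\<lambda>(i,j). \<Sum>l\<le>i. Lg i l * Bm l j)"
    by (rule eq_matI) (auto simp: ent)
  also have "det \<dots> = (\<Prod>i<?n. Lg i i) * det (mat ?n ?n (\<lambda>(i,j). Bm i j))"
    by (rule det_lower_mult)
  also have "(\<Prod>i<?n. Lg i i) = g x ^ ?n" by (simp add: Lg_def)
  also have "det (mat ?n ?n (\<lambda>(i,j). Bm i j)) = wronskian fs x"
    by (simp add: wronskian_det Bm_def)
  finally show ?thesis .
qed

lemma wronskian_isCont:
  assumes fs: "\<forall>f\<in>set fs. f holomorphic_on UNIV"
  shows "isCont (wronskian fs) x"
proof -
  have c: "isCont ((deriv ^^ i) (fs ! j)) x" if "j < length fs" for i j
  proof -
    have "(deriv ^^ i) (fs ! j) holomorphic_on UNIV"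
      by (rule holomorphic_higher_deriv) (use fs that in auto)
    thus ?thesis
      by (meson holomorphic_on_imp_continuous_on continuous_on_eq_continuous_at open_UNIV UNIV_I)
  qed
  have "wronskian fs = (\<lambda>x. \<Sum>\<sigma> | \<sigma> permutes {..<length fs}.
        of_int (sign \<sigma>) * (\<Prod>i<length fs. (deriv ^^ i) (fs ! \<sigma> i) x))"
    by (simp add: wronskian_def[abs_def])
  moreover have "isCont (\<lambda>x. \<Sum>\<sigma> | \<sigma> permutes {..<length fs}.
        of_int (sign \<sigma>) * (\<Prod>i<length fs. (deriv ^^ i) (fs ! \<sigma> i) x)) x"
  proof (intro continuous_intros)
    fix \<sigma> i assume "\<sigma> \<in> {\<sigma>. \<sigma> permutes {..<length fs}}" "i \<in> {..<length fs}"
    hence "\<sigma> i < length fs" using permutes_in_image by fastforce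
    thus "isCont ((deriv ^^ i) (fs ! \<sigma> i)) x" by (rule c)
  qed
  ultimately show ?thesis by simp
qed

lemma polyfun_fps:
  "(\<lambda>z::complex. \<Sum>k\<le>m. d k * z^k) has_fps_expansion (\<Sum>k\<le>m. fps_const (d k) * fps_X^k)"
  by (intro has_fps_expansion_sum has_fps_expansion_cmult_left has_fps_expansion_fps_X_power)

lemma polyfun_deriv0:
  "(deriv ^^ i) (\<lambda>z::complex. \<Sum>k\<le>m. d k * z^k) 0 = (if i \<le> m then fact i * d i else 0)"
proof -
  have "fps_nth (\<Sum>k\<le>m. fps_const (d k) * fps_X^k) i = (deriv ^^ i) (\<lambda>z::complex. \<Sum>k\<le>m. d k * z^k) 0 / fact i"
    by (rule fps_nth_fps_expansion[OF polyfun_fps])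
  moreover have "fps_nth (\<Sum>k\<le>m. fps_const (d k) * fps_X^k) i = (if i \<le> m then d i else 0)"
  proof -
    have "(\<Sum>k\<le>m. d k * (if i = k then 1 else 0)) = (\<Sum>k\<le>m. if i = k then d k else 0)"
      by (rule sum.cong) auto
    thus ?thesis by (simp add: fps_sum_nth)
  qed
  ultimately show ?thesis by (auto simp: field_simps)
qed

lemma laguerre_poly:
  "laguerre m b = (\<lambda>z. \<Sum>k\<le>m. (pochhammer (b + of_nat k + 1) (m - k) / fact (m - k) * (-1)^k / fact k) * z^k)"
  unfolding laguerre_def fun_eq_iff
proof (intro allI sum.cong refl)
  fix z k
  show "pochhammer (b + of_nat k + 1) (m - k) / fact (m - k) * (- z) ^ k / fact k =
    pochhammer (b + of_nat k + 1) (m - k) / fact (m - k) * (- 1) ^ k / fact k * z ^ k"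
    by (subst power_minus) simp
qed

lemma laguerre_neg_poly:
  "(\<lambda>y. laguerre m b (- y)) = (\<lambda>z. \<Sum>k\<le>m. (pochhammer (b + of_nat k + 1) (m - k) / fact (m - k) / fact k) * z^k)"
  unfolding laguerre_def fun_eq_iff by simp

lemma rb:
  fixes X Y r n C :: real
  assumes "r > 0" "X \<le> C + n" "Y \<ge> n / 2" "C \<ge> 0" "n \<ge> 4 * r * (C + 1)" "n > 0"
  shows "2 * X * r \<le> Y * (n + 1)"
proof -
  have "2 * X * r \<le> 2 * (C + n) * r" using assms by simp
  also have "\<dots> \<le> 2 * r * (C + 1) * (n + 1)"
    using assms by (simp add: algebra_simps)
  also have "\<dots> \<le> n / 2 * (n + 1)"
    using assms mult_right_mono[of "4 * r * (C + 1)" n "n+1"] by simp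
  also have "\<dots> \<le> Y * (n + 1)" using assms mult_right_mono by simp
  finally show ?thesis .
qed

definition kfps :: "complex \<Rightarrow> complex \<Rightarrow> complex fps" where
  "kfps c b = Abs_fps (\<lambda>k. pochhammer c k / pochhammer b k / fact k)"

lemma kummer_eval: "kummerM c b = eval_fps (kfps c b)"
  unfolding kummerM_def eval_fps_def[abs_def] kfps_def fun_eq_iff fps_nth_Abs_fps
  by (simp add: field_simps)

lemma kfps_hs:
  fixes c b :: complex
  shows
  "pochhammer c (Suc n) / pochhammer b (Suc n) / fact (Suc n) =
   (pochhammer c n / pochhammer b n / fact n) * ((c + of_nat n) / ((b + of_nat n) * (of_nat n + 1)))"
proof -
  have g: "(a::complex) * b / (c * d) / (e * f) = a / c / e * (b / (d * f))" for a b c d e f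
    unfolding divide_inverse inverse_mult_distrib by (simp only: ac_simps)
  show ?thesis unfolding pochhammer_Suc fact_Suc of_nat_mult of_nat_Suc
    using g[of "pochhammer c n" "c + of_nat n" "pochhammer b n" "b + of_nat n" "fact n" "1 + of_nat n"]
    by (simp add: ac_simps)
qed

lemma kfps_radius: "fps_conv_radius (kfps c b) = \<infinity>"
proof -
  define h where "h k = pochhammer c k / pochhammer b k / fact k" for k
  have hs: "h (Suc n) = h n * ((c + of_nat n) / ((b + of_nat n) * (of_nat n + 1)))" for n
    unfolding h_def by (rule kfps_hs)
  have "conv_radius h \<ge> \<infinity>"
  proof (rule conv_radius_geI_ex')
    fix r :: real assume r: "0 < r"
    define N where "N = nat \<lceil>2 * norm b + 4 * r * (norm c + 1) + 1\<rceil>"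
    show "summable (\<lambda>n. h n * of_real r ^ n)"
    proof (rule summable_ratio_test[of "1/2" N])
      fix n assume n: "N \<le> n"
      have n1: "real n \<ge> 2 * norm b + 4 * r * (norm c + 1) + 1" using n unfolding N_def by linarith
      have nb: "0 \<le> 4 * r * (norm c + 1)" using r by simp
      have npos: "real n > 0" using n1 nb norm_ge_zero[of b] by linarith
      define X where "X = norm (c + of_nat n)"
      define Y where "Y = norm (b + of_nat n)"
      have X: "X \<le> norm c + real n" unfolding X_def
        using norm_triangle_ineq[of c "of_nat n"] by simp
      have Y: "Y \<ge> real n / 2"
      proof -
        have "real n = norm (of_nat n :: complex)" by simp
        also have "\<dots> \<le> norm (b + of_nat n) + norm b"
          using norm_triangle_ineq4[of "b + of_nat n" b] by simp
        finally show ?thesis unfolding Y_def using n1 nb by linarith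
      qed
      have Ypos: "Y > 0" using Y npos by linarith
      have key: "2 * X * r \<le> Y * (real n + 1)"
      proof (rule rb[OF r X Y norm_ge_zero])
        show "4 * r * (norm c + 1) \<le> real n" using n1 norm_ge_zero[of b] by linarith
      qed (rule npos)
      have "norm (h (Suc n) * of_real r ^ Suc n) = norm (h n * of_real r ^ n) * (X * r / (Y * (real n + 1)))"
      proof -
        have e: "norm (of_nat n + 1 :: complex) = real n + 1"
          by (metis of_nat_Suc norm_of_nat add.commute)
        show ?thesis unfolding hs X_def Y_def
          by (simp add: norm_mult norm_divide norm_power e abs_of_pos[OF r] mult_ac)
      qed
      also have "\<dots> \<le> norm (h n * of_real r ^ n) * (1/2)"
      proof (rule mult_left_mono)
        show "X * r / (Y * (real n + 1)) \<le> 1/2"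
          using key Ypos npos by (simp add: divide_simps)
      qed simp
      finally show "norm (h (Suc n) * of_real r ^ Suc n) \<le> 1/2 * norm (h n * of_real r ^ n)"
        by simp
    qed simp
  qed
  thus ?thesis by (simp add: fps_conv_radius_def kfps_def h_def[abs_def])
qed

lemma kummer_holo: "kummerM c b holomorphic_on S"
  unfolding kummer_eval by (rule holomorphic_on_eval_fps) (simp add: kfps_radius)

lemma kummer_deriv0: "(deriv ^^ i) (kummerM c b) 0 = pochhammer c i / pochhammer b i"
proof -
  have "kummerM c b has_fps_expansion kfps c b"
    unfolding kummer_eval by (rule eval_fps_has_fps_expansion) (simp add: kfps_radius)
  from fps_nth_fps_expansion[OF this, of i]
  show ?thesis by (simp add: kfps_def field_simps)
qed

lemma deriv_exp_iter: "(deriv ^^ j) exp = (exp :: complex \<Rightarrow> complex)"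
proof (induction j)
  case (Suc j)
  have "deriv exp = (exp :: complex \<Rightarrow> complex)"
    by (rule ext, rule DERIV_imp_deriv, rule DERIV_exp)
  with Suc show ?case by simp
qed simp

lemma fact_over_fact:
  assumes "k \<le> n"
  shows "(fact n :: complex) = fact (n - k) * pochhammer (of_nat (n - k) + 1) k"
proof -
  have "(fact n :: complex) = pochhammer 1 n" by (simp add: pochhammer_fact)
  also have "\<dots> = pochhammer 1 (n - k) * pochhammer (1 + of_nat (n - k)) k"
    using pochhammer_product[of "n - k" n "1::complex"] assms by simp
  finally show ?thesis by (metis pochhammer_fact add.commute)
qed

lemma poch_neg_nat:
  assumes "k \<le> n"
  shows "pochhammer (- of_nat n :: complex) k = (-1)^k * fact n / fact (n - k)"
proof -
  have "pochhammer (- of_nat n :: complex) k = (-1)^k * pochhammer (of_nat n - of_nat k + 1) k"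
    by (rule pochhammer_minus)
  also have "of_nat n - of_nat k + 1 = (of_nat (n - k) + 1 :: complex)"
    using assms by (simp add: of_nat_diff)
  finally show ?thesis using fact_over_fact[OF assms] by simp
qed

lemma poch_vdm_variant:
  fixes \<beta> :: complex
  shows "(\<Sum>k\<le>i. of_nat (i choose k) * ((-1)^k * pochhammer (- of_nat n) k) * pochhammer (\<beta> + of_nat k) (i - k))
     = pochhammer (\<beta> + of_nat n) i"
proof -
  have e1: "pochhammer (\<beta> + of_nat k) (i - k) = (-1)^(i-k) * pochhammer (- (\<beta> + of_nat i - 1)) (i - k)"
    if "k \<le> i" for k
  proof -
    have "pochhammer ((\<beta> + of_nat i - 1) - of_nat (i - k) + 1) (i - k) = (-1)^(i-k) * pochhammer (- (\<beta> + of_nat i - 1)) (i - k)"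
      by (rule pochhammer_minus')
    moreover have "(\<beta> + of_nat i - 1) - of_nat (i - k) + 1 = \<beta> + of_nat k"
      using that by (simp add: of_nat_diff)
    ultimately show ?thesis by simp
  qed
  have e2: "pochhammer (\<beta> + of_nat n) i = (-1)^i * pochhammer (- (\<beta> + of_nat n + of_nat i - 1)) i"
  proof -
    have "pochhammer ((\<beta> + of_nat n + of_nat i - 1) - of_nat i + 1) i = (-1)^i * pochhammer (- (\<beta> + of_nat n + of_nat i - 1)) i"
      by (rule pochhammer_minus')
    thus ?thesis by simp
  qed
  have vdm: "pochhammer (- of_nat n + - (\<beta> + of_nat i - 1)) i =
     (\<Sum>k\<le>i. of_nat (i choose k) * pochhammer (- of_nat n) k * pochhammer (- (\<beta> + of_nat i - 1)) (i - k))"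
    by (rule pochhammer_binomial_sum)
  have "(\<Sum>k\<le>i. of_nat (i choose k) * ((-1)^k * pochhammer (- of_nat n) k) * pochhammer (\<beta> + of_nat k) (i - k))
     = (\<Sum>k\<le>i. (-1)^i * (of_nat (i choose k) * pochhammer (- of_nat n) k * pochhammer (- (\<beta> + of_nat i - 1)) (i - k)))"
  proof (rule sum.cong[OF refl])
    fix k assume "k \<in> {..i}"
    hence k: "k \<le> i" by simp
    have pm: "(-1::complex)^k * (-1)^(i-k) = (-1)^i" using k by (simp add: power_add[symmetric])
    have "of_nat (i choose k) * ((-1)^k * pochhammer (- of_nat n) k) * pochhammer (\<beta> + of_nat k) (i - k) =
      of_nat (i choose k) * pochhammer (- of_nat n) k * pochhammer (- (\<beta> + of_nat i - 1)) (i - k) * ((-1::complex)^k * (-1)^(i-k))"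
      unfolding e1[OF k] by (simp only: ac_simps)
    also have "\<dots> = of_nat (i choose k) * pochhammer (- of_nat n) k * pochhammer (- (\<beta> + of_nat i - 1)) (i - k) * (-1)^i"
      by (simp only: pm)
    finally show "of_nat (i choose k) * ((-1)^k * pochhammer (- of_nat n) k) * pochhammer (\<beta> + of_nat k) (i - k) =
      (-1)^i * (of_nat (i choose k) * pochhammer (- of_nat n) k * pochhammer (- (\<beta> + of_nat i - 1)) (i - k))"
      by (simp only: ac_simps)
  qed
  also have "\<dots> = (-1)^i * (\<Sum>k\<le>i. of_nat (i choose k) * pochhammer (- of_nat n) k * pochhammer (- (\<beta> + of_nat i - 1)) (i - k))"
    by (simp only: sum_distrib_left)
  also have "\<dots> = (-1)^i * pochhammer (- of_nat n + - (\<beta> + of_nat i - 1)) i"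
    by (simp only: vdm)
  also have "- of_nat n + - (\<beta> + of_nat i - 1) = - (\<beta> + of_nat n + of_nat i - 1)" by simp
  finally show ?thesis using e2 by simp
qed

lemma polyfun_holo: "(\<lambda>z::complex. \<Sum>k\<le>m. d k * z^k) holomorphic_on S"
  by (intro holomorphic_on_sum holomorphic_on_mult holomorphic_on_const holomorphic_on_power holomorphic_on_ident)

lemma col_L:
  fixes a :: complex
  assumes nz: "pochhammer (1 - a) i \<noteq> 0"
  shows "(deriv ^^ i) (laguerre m (- a)) 0 =
    pochhammer (1 - a) m / fact m * pochhammer (- of_nat m) i / pochhammer (1 - a) i"
proof (cases "i \<le> m")
  case True
  have L: "(deriv ^^ i) (laguerre m (- a)) 0 =
     fact i * (pochhammer (- a + of_nat i + 1) (m - i) / fact (m - i) * (-1)^i / fact i)"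
    unfolding laguerre_poly polyfun_deriv0 using True by simp
  have p1: "pochhammer (1 - a) m = pochhammer (1 - a) i * pochhammer (- a + of_nat i + 1) (m - i)"
    using pochhammer_product[OF True, of "1 - a"] by (simp add: algebra_simps)
  have p2: "pochhammer (- of_nat m :: complex) i = (-1)^i * fact m / fact (m - i)"
    by (rule poch_neg_nat[OF True])
  show ?thesis unfolding L p1 p2 using nz by (simp add: field_simps)
next
  case False
  have L: "(deriv ^^ i) (laguerre m (- a)) 0 = 0"
    unfolding laguerre_poly polyfun_deriv0 using False by simp
  have "pochhammer (- of_nat m :: complex) i = 0"
    using False by (simp add: pochhammer_of_nat_eq_0_iff)
  thus ?thesis using L by simp
qed

lemma col_E:
  fixes a :: complex
  assumes nz: "\<And>j. pochhammer (1 - a) j \<noteq> 0"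
  shows "(deriv ^^ i) (\<lambda>y. exp y * laguerre n (- a) (- y)) 0 =
    pochhammer (1 - a) n / fact n * pochhammer (- a + 1 + of_nat n) i / pochhammer (1 - a) i"
proof -
  define d where "d k = pochhammer (- a + of_nat k + 1) (n - k) / fact (n - k) / fact k" for k
  define Lp where "Lp = (\<lambda>z::complex. \<Sum>k\<le>n. d k * z^k)"
  define \<beta> where "\<beta> = 1 - a"
  have fe: "(\<lambda>y. exp y * laguerre n (- a) (- y)) = (\<lambda>y. Lp y * exp y)"
    using laguerre_neg_poly[of n "- a"] unfolding Lp_def d_def fun_eq_iff by (simp add: mult.commute)
  have "(deriv ^^ i) (\<lambda>y. Lp y * exp y) 0 =
      (\<Sum>k = 0..i. of_nat (i choose k) * (deriv ^^ k) Lp 0 * (deriv ^^ (i - k)) exp 0)"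
    by (rule higher_deriv_mult[of Lp UNIV exp]) (auto simp: Lp_def polyfun_holo holomorphic_on_exp)
  also have "\<dots> = (\<Sum>k\<le>i. of_nat (i choose k) * (if k \<le> n then fact k * d k else 0))"
    unfolding Lp_def polyfun_deriv0 deriv_exp_iter by (simp add: atLeast0AtMost)
  also have "\<dots> = (\<Sum>k\<le>i. pochhammer \<beta> n / fact n / pochhammer \<beta> i *
      (of_nat (i choose k) * ((-1)^k * pochhammer (- of_nat n) k) * pochhammer (\<beta> + of_nat k) (i - k)))"
  proof (rule sum.cong[OF refl])
    fix k assume "k \<in> {..i}"
    hence ki: "k \<le> i" by simp
    show "of_nat (i choose k) * (if k \<le> n then fact k * d k else 0) =
      pochhammer \<beta> n / fact n / pochhammer \<beta> i *
      (of_nat (i choose k) * ((-1)^k * pochhammer (- of_nat n) k) * pochhammer (\<beta> + of_nat k) (i - k))"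
    proof (cases "k \<le> n")
      case True
      have p2: "pochhammer (- of_nat n :: complex) k = (-1)^k * fact n / fact (n - k)"
        by (rule poch_neg_nat[OF True])
      have pm: "(-1::complex)^k * (-1)^k = 1" by (simp add: power_add[symmetric])
      have pi: "pochhammer \<beta> i = pochhammer \<beta> k * pochhammer (\<beta> + of_nat k) (i - k)"
        by (rule pochhammer_product[OF ki])
      have pn: "pochhammer \<beta> n = pochhammer \<beta> k * pochhammer (\<beta> + of_nat k) (n - k)"
        by (rule pochhammer_product[OF True])
      have dk: "fact k * d k = pochhammer (\<beta> + of_nat k) (n - k) / fact (n - k)"
        unfolding d_def \<beta>_def by (simp add: algebra_simps)
      have nzk: "pochhammer \<beta> k \<noteq> 0" "pochhammer (\<beta> + of_nat k) (i - k) \<noteq> 0"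
      proof -
        have "pochhammer \<beta> i \<noteq> 0" using nz[of i] unfolding \<beta>_def .
        thus "pochhammer \<beta> k \<noteq> 0" "pochhammer (\<beta> + of_nat k) (i - k) \<noteq> 0"
          unfolding pi by auto
      qed
      show ?thesis using True unfolding dk p2 pn pi using nzk
        by (simp add: field_simps pm)
    next
      case False
      have "pochhammer (- of_nat n :: complex) k = 0"
        using False by (simp add: pochhammer_of_nat_eq_0_iff)
      thus ?thesis using False by simp
    qed
  qed
  also have "\<dots> = pochhammer \<beta> n / fact n / pochhammer \<beta> i *
      (\<Sum>k\<le>i. of_nat (i choose k) * ((-1)^k * pochhammer (- of_nat n) k) * pochhammer (\<beta> + of_nat k) (i - k))"
    by (simp only: sum_distrib_left)
  also have "\<dots> = pochhammer \<beta> n / fact n / pochhammer \<beta> i * pochhammer (\<beta> + of_nat n) i"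
    by (simp only: poch_vdm_variant)
  finally show ?thesis unfolding fe \<beta>_def by (simp add: algebra_simps)
qed

lemma prod_list_nth: "prod_list (map f xs) = (\<Prod>i<length xs. f (xs ! i))"
  by (induction xs) (simp_all add: prod.lessThan_Suc_shift del: prod.lessThan_Suc)

lemma vandermonde_snoc:
  "vandermonde (xs @ [x]) = vandermonde xs * prod_list (map (\<lambda>z. x - z) xs)"
proof -
  let ?n = "length xs"
  have "vandermonde (xs @ [x]) = (\<Prod>j<Suc ?n. \<Prod>i<j. ((xs @ [x]) ! j - (xs @ [x]) ! i))"
    by (simp add: vandermonde_def)
  also have "\<dots> = (\<Prod>j<?n. \<Prod>i<j. ((xs @ [x]) ! j - (xs @ [x]) ! i)) * (\<Prod>i<?n. ((xs @ [x]) ! ?n - (xs @ [x]) ! i))"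
    by simp
  also have "(\<Prod>j<?n. \<Prod>i<j. ((xs @ [x]) ! j - (xs @ [x]) ! i)) = vandermonde xs"
    unfolding vandermonde_def by (intro prod.cong refl) (auto simp: nth_append)
  also have "(\<Prod>i<?n. ((xs @ [x]) ! ?n - (xs @ [x]) ! i)) = prod_list (map (\<lambda>z. x - z) xs)"
    unfolding prod_list_nth by (intro prod.cong refl) (auto simp: nth_append)
  finally show ?thesis .
qed

lemma vandermonde_Cons:
  "vandermonde (x # xs) = vandermonde xs * prod_list (map (\<lambda>z. z - x) xs)"
proof -
  let ?n = "length xs"
  have "vandermonde (x # xs) = (\<Prod>j<Suc ?n. \<Prod>i<j. ((x # xs) ! j - (x # xs) ! i))"
    by (simp add: vandermonde_def)
  also have "\<dots> = (\<Prod>j<?n. \<Prod>i<Suc j. ((x # xs) ! Suc j - (x # xs) ! i))"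
    by (subst prod.lessThan_Suc_shift) simp
  also have "\<dots> = (\<Prod>j<?n. (xs ! j - x) * (\<Prod>i<j. (xs ! j - xs ! i)))"
    by (intro prod.cong refl, subst prod.lessThan_Suc_shift) simp
  also have "\<dots> = vandermonde xs * prod_list (map (\<lambda>z. z - x) xs)"
    by (simp add: prod.distrib vandermonde_def prod_list_nth mult.commute)
  finally show ?thesis .
qed

lemma prod_list_neg: "prod_list (map (\<lambda>z. z - x) xs) = (-1::complex)^length xs * prod_list (map (\<lambda>z. x - z) xs)"
  by (induction xs) (auto simp: algebra_simps)

lemma sign_pow: "(-1::complex)^n \<in> {1, -1}"
  by (induction n) auto

lemma vandermonde_rev:
  "\<exists>s\<in>{1, -1::complex}. vandermonde (rev xs) = s * vandermonde xs"
proof (induction xs)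
  case Nil
  then show ?case by auto
next
  case (Cons x xs)
  then obtain s where s: "s \<in> {1, -1}" "vandermonde (rev xs) = s * vandermonde xs" by blast
  have "vandermonde (rev (x # xs)) = vandermonde (rev xs) * prod_list (map (\<lambda>z. x - z) (rev xs))"
    by (simp add: vandermonde_snoc)
  also have "prod_list (map (\<lambda>z. x - z) (rev xs)) = prod_list (map (\<lambda>z. x - z) xs)"
    by (simp add: rev_map[symmetric])
  also have "vandermonde (x # xs) = vandermonde xs * ((-1)^length xs * prod_list (map (\<lambda>z. x - z) xs))"
    by (simp add: vandermonde_Cons prod_list_neg)
  ultimately have "vandermonde (rev (x # xs)) = (s * (-1)^length xs) * vandermonde (x # xs)"
    using s(2) by (simp add: power2_eq_square mult_ac)
  moreover have "s * (-1)^length xs \<in> {1, -1::complex}"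
    using s(1) sign_pow[of "length xs"] by auto
  ultimately show ?case by blast
qed

lemma vandermonde_rev_prefix:
  "\<exists>s\<in>{1, -1::complex}. vandermonde (rev xs @ ys) = s * vandermonde (xs @ ys)"
proof (induction ys rule: rev_induct)
  case Nil
  then show ?case using vandermonde_rev[of xs] by simp
next
  case (snoc y ys)
  then obtain s where s: "s \<in> {1, -1}" "vandermonde (rev xs @ ys) = s * vandermonde (xs @ ys)" by blast
  have "vandermonde (rev xs @ ys @ [y]) = vandermonde (rev xs @ ys) * prod_list (map (\<lambda>z. y - z) (rev xs @ ys))"
    using vandermonde_snoc[of "rev xs @ ys" y] by simp
  also have "prod_list (map (\<lambda>z. y - z) (rev xs @ ys)) = prod_list (map (\<lambda>z. y - z) (xs @ ys))"
    by (simp add: rev_map[symmetric])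
  also have "vandermonde (rev xs @ ys) * prod_list (map (\<lambda>z. y - z) (xs @ ys)) = s * vandermonde (xs @ ys @ [y])"
    using vandermonde_snoc[of "xs @ ys" y] s(2) by simp
  finally show ?case using s(1) by auto
qed

lemma split_idx_props:
  assumes "sorted_wrt (>) ns"
  shows "1 \<le> split_idx ns r \<and> split_idx ns r \<le> length ns + 1 \<and>
    (\<forall>i\<in>{split_idx ns r..length ns}. ns ! (i - 1) < r) \<and> (\<forall>i\<in>{1..<split_idx ns r}. ns ! (i - 1) \<ge> r)"
proof -
  define P where "P s = (1 \<le> s \<and> (\<forall>i\<in>{s..length ns}. ns ! (i - 1) < r) \<and> (\<forall>i\<in>{1..<s}. ns ! (i - 1) \<ge> r))" for s
  define s0 where "s0 = length (takeWhile (\<lambda>x. x \<ge> r) ns) + 1"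
  have s0le: "s0 \<le> length ns + 1" unfolding s0_def using length_takeWhile_le[of "\<lambda>x. x \<ge> r" ns] by simp
  have P0: "P s0"
    unfolding P_def
  proof (intro conjI ballI)
    show "1 \<le> s0" by (simp add: s0_def)
  next
    fix i assume i: "i \<in> {1..<s0}"
    hence "i - 1 < length (takeWhile (\<lambda>x. x \<ge> r) ns)" unfolding s0_def by auto
    hence "takeWhile (\<lambda>x. x \<ge> r) ns ! (i - 1) \<in> set (takeWhile (\<lambda>x. x \<ge> r) ns)" by (rule nth_mem)
    moreover have "takeWhile (\<lambda>x. x \<ge> r) ns ! (i - 1) = ns ! (i - 1)"
      using \<open>i - 1 < _\<close> by (rule takeWhile_nth)
    ultimately show "ns ! (i - 1) \<ge> r" by (metis set_takeWhileD)
  next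
    fix i assume i: "i \<in> {s0..length ns}"
    have lt: "length (takeWhile (\<lambda>x. x \<ge> r) ns) < length ns" using i unfolding s0_def by auto
    have "\<not> ns ! length (takeWhile (\<lambda>x. x \<ge> r) ns) \<ge> r"
      using nth_length_takeWhile[OF lt] by simp
    hence a: "ns ! (s0 - 1) < r" unfolding s0_def by simp
    show "ns ! (i - 1) < r"
    proof (cases "i = s0")
      case True thus ?thesis using a by simp
    next
      case False
      hence "s0 - 1 < i - 1" "i - 1 < length ns" using i s0_def by auto
      hence "ns ! (s0 - 1) > ns ! (i - 1)" using sorted_wrt_nth_less[OF assms] by blast
      thus ?thesis using a by simp
    qed
  qed
  have ex: "\<exists>s. P s" using P0 by blast
  define l where "l = (LEAST s. P s)"
  have sd0: "split_idx ns r = (if \<exists>s. P s then LEAST s. P s else length ns + 1)"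
    unfolding split_idx_def P_def by (rule refl)
  have sd: "split_idx ns r = l"
    unfolding sd0 l_def using ex by (simp only: if_True)
  have Pl: "P l" unfolding l_def using P0 by (rule LeastI)
  have ll: "l \<le> s0" unfolding l_def using P0 by (rule Least_le)
  show ?thesis unfolding sd using Pl ll s0le unfolding P_def by linarith
qed

lemma poch_nz:
  assumes "\<forall>k::nat. \<alpha> \<noteq> of_nat (Suc k)"
  shows "pochhammer (1 - complex_of_real \<alpha> + of_nat d) k \<noteq> 0"
proof
  assume "pochhammer (1 - complex_of_real \<alpha> + of_nat d) k = 0"
  then obtain j where "1 - complex_of_real \<alpha> + of_nat d = - of_nat j"
    by (auto simp: pochhammer_eq_0_iff)
  hence "Re (1 - complex_of_real \<alpha> + of_nat d) = Re (- of_nat j)" by simp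
  hence "\<alpha> = of_nat (Suc (d + j))" by simp
  thus False using assms by blast
qed

lemma list_poch:
  fixes a :: complex and ds :: "nat list"
  assumes s1: "1 \<le> s" and s2: "s \<le> length ds + 1"
    and hi: "\<forall>i\<in>{s..length ds}. ds ! (i - 1) < r" and lo: "\<forall>i\<in>{1..<s}. ds ! (i - 1) \<ge> r"
  shows "(\<Prod>j<length ds. pochhammer (1 - a) (ds ! j)) *
      (\<Prod>j=s..length ds. pochhammer (- a + 1 + of_nat (ds ! (j - 1))) (r - ds ! (j - 1))) =
    pochhammer (1 - a) r ^ length ds * (\<Prod>j=1..s-1. pochhammer (- a + of_nat r + 1) (ds ! (j - 1) - r))"
proof -
  let ?n = "length ds"
  let ?R = "pochhammer (1 - a) r"
  let ?f = "\<lambda>j. pochhammer (1 - a) (ds ! (j - 1))"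
  let ?Q = "\<lambda>j. pochhammer (- a + 1 + of_nat (ds ! (j - 1))) (r - ds ! (j - 1))"
  let ?P = "\<lambda>j. pochhammer (- a + of_nat r + 1) (ds ! (j - 1) - r)"
  have h1: "(\<Prod>j<?n. pochhammer (1 - a) (ds ! j)) = (\<Prod>j\<in>{Suc 0..?n}. ?f j)"
    by (simp add: prod.atLeast1_atMost_eq)
  have un: "{Suc 0..?n} = {1..s-1} \<union> {s..?n}" using s1 s2 by auto
  have h2: "(\<Prod>j\<in>{Suc 0..?n}. ?f j) = (\<Prod>j\<in>{1..s-1}. ?f j) * (\<Prod>j\<in>{s..?n}. ?f j)"
    unfolding un by (rule prod.union_disjoint) auto
  have hA: "(\<Prod>j\<in>{1..s-1}. ?f j) = ?R ^ (s - 1) * (\<Prod>j=1..s-1. ?P j)"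
  proof -
    have "(\<Prod>j\<in>{1..s-1}. ?f j) = (\<Prod>j\<in>{1..s-1}. ?R * ?P j)"
    proof (rule prod.cong[OF refl])
      fix j assume j: "j \<in> {1..s-1}"
      hence "ds ! (j - 1) \<ge> r" using lo by auto
      hence "pochhammer (1 - a) (ds ! (j - 1)) = ?R * pochhammer (1 - a + of_nat r) (ds ! (j - 1) - r)"
        by (rule pochhammer_product)
      thus "?f j = ?R * ?P j" by (simp add: algebra_simps)
    qed
    also have "\<dots> = ?R ^ (s - 1) * (\<Prod>j=1..s-1. ?P j)"
      by (simp add: prod.distrib)
    finally show ?thesis .
  qed
  have hB: "(\<Prod>j\<in>{s..?n}. ?f j) * (\<Prod>j=s..?n. ?Q j) = ?R ^ (?n + 1 - s)"
  proof -
    have "(\<Prod>j\<in>{s..?n}. ?f j) * (\<Prod>j=s..?n. ?Q j) = (\<Prod>j\<in>{s..?n}. ?f j * ?Q j)"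
      by (simp add: prod.distrib)
    also have "\<dots> = (\<Prod>j\<in>{s..?n}. ?R)"
    proof (rule prod.cong[OF refl])
      fix j assume j: "j \<in> {s..?n}"
      hence "ds ! (j - 1) < r" using hi by blast
      hence "ds ! (j - 1) \<le> r" by simp
      hence "?R = pochhammer (1 - a) (ds ! (j - 1)) * pochhammer (1 - a + of_nat (ds ! (j - 1))) (r - ds ! (j - 1))"
        by (rule pochhammer_product)
      thus "?f j * ?Q j = ?R" by (simp add: algebra_simps)
    qed
    also have "\<dots> = ?R ^ (?n + 1 - s)" by simp
    finally show ?thesis .
  qed
  have "(\<Prod>j<?n. pochhammer (1 - a) (ds ! j)) * (\<Prod>j=s..?n. ?Q j) =
     (\<Prod>j\<in>{1..s-1}. ?f j) * ((\<Prod>j\<in>{s..?n}. ?f j) * (\<Prod>j=s..?n. ?Q j))"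
    unfolding h1 h2 by (simp only: mult.assoc)
  also have "\<dots> = ?R ^ (s - 1) * ?R ^ (?n + 1 - s) * (\<Prod>j=1..s-1. ?P j)"
    unfolding hA hB by (simp only: ac_simps)
  also have "?R ^ (s - 1) * ?R ^ (?n + 1 - s) = ?R ^ ?n"
    using s1 s2 by (simp add: power_add[symmetric])
  finally show ?thesis .
qed

lemma P1_lemma:
  fixes a :: complex
  shows "(\<Prod>k=1..r+1. pochhammer (- a + of_nat k) (r + 1 - k)) * (\<Prod>i<r+1. pochhammer (1 - a) i) =
    pochhammer (1 - a) r ^ (r + 1)"
proof -
  have "(\<Prod>k=1..r+1. pochhammer (- a + of_nat k) (r + 1 - k)) = (\<Prod>i<r+1. pochhammer (- a + of_nat (Suc i)) (r - i))"
    by (simp add: prod.atLeast1_atMost_eq)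
  hence "(\<Prod>k=1..r+1. pochhammer (- a + of_nat k) (r + 1 - k)) * (\<Prod>i<r+1. pochhammer (1 - a) i) =
     (\<Prod>i<r+1. pochhammer (- a + of_nat (Suc i)) (r - i) * pochhammer (1 - a) i)"
    by (simp add: prod.distrib)
  also have "\<dots> = (\<Prod>i<r+1. pochhammer (1 - a) r)"
  proof (rule prod.cong[OF refl])
    fix i assume "i \<in> {..<r+1}"
    hence "i \<le> r" by simp
    hence "pochhammer (1 - a) r = pochhammer (1 - a) i * pochhammer (1 - a + of_nat i) (r - i)"
      by (rule pochhammer_product)
    thus "pochhammer (- a + of_nat (Suc i)) (r - i) * pochhammer (1 - a) i = pochhammer (1 - a) r"
      by (simp add: algebra_simps)
  qed
  also have "\<dots> = pochhammer (1 - a) r ^ (r + 1)" by simp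
  finally show ?thesis .
qed

lemma powr_cancel:
  fixes x a :: complex
  assumes "x \<noteq> 0"
  shows "x powr (a * of_nat N) * (x powr (- a)) ^ N = 1"
proof -
  have "(x powr (- a)) ^ N = exp (- a * ln x) ^ N"
    using assms by (simp add: powr_def)
  also have "\<dots> = exp (of_nat N * (- a * ln x))"
    by (rule exp_of_nat_mult[symmetric])
  finally have "(x powr (- a)) ^ N = exp (of_nat N * (- a * ln x))" .
  moreover have "x powr (a * of_nat N) = exp (a * of_nat N * ln x)"
    using assms by (simp add: powr_def)
  ultimately show ?thesis by (simp add: exp_add[symmetric] algebra_simps)
qed

theorem corollary6p2:
  fixes \<alpha> :: real and lam :: complex and ns ms :: "nat list"
  assumes "sorted_wrt (>) ns" and "sorted_wrt (>) ms"
    and "\<forall>k::nat. \<alpha> \<noteq> of_nat (Suc k)"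
  shows "\<exists>\<sigma>\<in>{1, -1::complex}.
           (G_fun \<alpha> lam ns ms \<longlongrightarrow> \<sigma> * G0_formula \<alpha> lam ns ms) (at 0 within {z. 0 < Re z})"
proof -
  define a where "a = complex_of_real \<alpha>"
  define p where "p = length ns"
  define q where "q = length ms"
  define r where "r = p + q"
  define N where "N = r + 1"
  define S where "S = {z::complex. 0 < Re z}"
  define fs0 where "fs0 = map (\<lambda>m. laguerre m (- a)) ms @ map (\<lambda>n y. exp y * laguerre n (- a) (- y)) ns
     @ [kummerM (- lam - a) (1 - a)]"
  define g where "g = (\<lambda>y::complex. y powr (- a))"
  define Kl where "Kl = map (\<lambda>m. pochhammer (1 - a) m / fact m) ms @ map (\<lambda>n. pochhammer (1 - a) n / fact n) ns @ [1]"
  define cl where "cl = map (\<lambda>m. - of_nat m) ms @ map (\<lambda>n. - a + 1 + of_nat n) ns @ [- lam - a]"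
  have lenfs: "length fs0 = N" by (simp add: fs0_def N_def r_def p_def q_def)
  have lenK: "length Kl = N" by (simp add: Kl_def N_def r_def p_def q_def)
  have lenc: "length cl = N" by (simp add: cl_def N_def r_def p_def q_def)
  have nzall: "pochhammer (1 - a + of_nat d) k \<noteq> 0" for d k
    unfolding a_def by (rule poch_nz[OF assms(3)])
  have nz: "pochhammer (1 - a) k \<noteq> 0" for k
    using nzall[of 0 k] by simp

  have holo: "\<forall>f\<in>set fs0. f holomorphic_on UNIV"
  proof -
    have h1: "laguerre m (- a) holomorphic_on UNIV" for m
      unfolding laguerre_poly by (rule polyfun_holo)
    have h2: "(\<lambda>y. exp y * laguerre n (- a) (- y)) holomorphic_on UNIV" for n
    proof -
      have "(\<lambda>y. laguerre n (- a) (- y)) holomorphic_on UNIV"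
        unfolding laguerre_neg_poly by (rule polyfun_holo)
      thus ?thesis by (intro holomorphic_on_mult holomorphic_on_exp)
    qed
    show ?thesis unfolding fs0_def using h1 h2 kummer_holo by auto
  qed

  have listeq: "map (\<lambda>m. (\<lambda>y. y powr (- a) * laguerre m (- a) y)) ms @
         map (\<lambda>n. (\<lambda>y. exp y * y powr (- a) * laguerre n (- a) (- y))) ns @
         [(\<lambda>y. y powr (- a) * kummerM (- lam - a) (1 - a) y)] = map (\<lambda>f y. g y * f y) fs0"
    by (simp add: fs0_def g_def fun_eq_iff mult_ac)
  have Gx: "G_fun \<alpha> lam ns ms x = exp (- of_nat p * x) * x powr (a * of_nat N) * wronskian (map (\<lambda>f y. g y * f y) fs0) x" for x
    unfolding G_fun_def Let_def a_def[symmetric] listeq p_def[symmetric] N_def r_def q_def by simp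
  have openS: "open S" unfolding S_def by (rule open_halfspace_Re_gt)
  have gholo: "g holomorphic_on S"
    unfolding g_def S_def
    by (rule holomorphic_on_powr[of "\<lambda>y. y" _ "\<lambda>_. - a", simplified])
       (auto simp: holomorphic_on_ident complex_nonpos_Reals_iff)
  have Geq: "G_fun \<alpha> lam ns ms x = exp (- of_nat p * x) * wronskian fs0 x" if x: "x \<in> S" for x
  proof -
    have "wronskian (map (\<lambda>f y. g y * f y) fs0) x = g x ^ length fs0 * wronskian fs0 x"
      by (rule wronskian_mult[OF openS x gholo]) (use holo in \<open>auto intro: holomorphic_on_subset\<close>)
    moreover have "x \<noteq> 0" using x by (auto simp: S_def)
    ultimately show ?thesis
      unfolding Gx using powr_cancel[of x a N] lenfs by (simp add: g_def mult_ac)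
  qed

  have cont: "isCont (\<lambda>x. exp (- of_nat p * x) * wronskian fs0 x) 0"
    by (intro continuous_intros wronskian_isCont holo)
  hence "continuous (at 0 within S) (\<lambda>x. exp (- of_nat p * x) * wronskian fs0 x)"
    by (rule continuous_at_imp_continuous_within)
  hence "((\<lambda>x. exp (- of_nat p * x) * wronskian fs0 x) \<longlongrightarrow> wronskian fs0 0) (at 0 within S)"
    unfolding continuous_within by simp
  hence lim: "(G_fun \<alpha> lam ns ms \<longlongrightarrow> wronskian fs0 0) (at 0 within S)"
  proof (rule tendsto_cong[THEN iffD1, rotated])
    show "\<forall>\<^sub>F x in at 0 within S. exp (- of_nat p * x) * wronskian fs0 x = G_fun \<alpha> lam ns ms x"
      unfolding eventually_at_filter by (auto intro!: always_eventually simp: Geq)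
  qed

  have entry: "(deriv ^^ i) (fs0 ! j) 0 = inverse (pochhammer (1 - a) i) * (Kl ! j) * pochhammer (cl ! j) i"
    if j: "j < N" for i j
  proof -
    consider (m) "j < q" | (n) "q \<le> j" "j < q + p" | (k) "j = q + p"
      using j unfolding N_def r_def by linarith
    thus ?thesis
    proof cases
      case m
      have "(deriv ^^ i) (fs0 ! j) 0 = (deriv ^^ i) (laguerre (ms ! j) (- a)) 0"
        using m by (simp add: fs0_def nth_append q_def)
      also have "\<dots> = pochhammer (1 - a) (ms ! j) / fact (ms ! j) * pochhammer (- of_nat (ms ! j)) i / pochhammer (1 - a) i"
        by (rule col_L[OF nz])
      also have "\<dots> = inverse (pochhammer (1 - a) i) * (Kl ! j) * pochhammer (cl ! j) i"
        using m by (simp add: Kl_def cl_def nth_append q_def divide_inverse mult_ac)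
      finally show ?thesis .
    next
      case n
      define k where "k = j - q"
      have k: "k < p" "j = q + k" using n by (auto simp: k_def)
      have "(deriv ^^ i) (fs0 ! j) 0 = (deriv ^^ i) (\<lambda>y. exp y * laguerre (ns ! k) (- a) (- y)) 0"
        using k by (simp add: fs0_def nth_append q_def p_def)
      also have "\<dots> = pochhammer (1 - a) (ns ! k) / fact (ns ! k) * pochhammer (- a + 1 + of_nat (ns ! k)) i / pochhammer (1 - a) i"
        by (rule col_E[OF nz])
      also have "\<dots> = inverse (pochhammer (1 - a) i) * (Kl ! j) * pochhammer (cl ! j) i"
        using k by (simp add: Kl_def cl_def nth_append q_def p_def divide_inverse mult_ac)
      finally show ?thesis .
    next
      case k
      have "(deriv ^^ i) (fs0 ! j) 0 = (deriv ^^ i) (kummerM (- lam - a) (1 - a)) 0"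
        using k by (simp add: fs0_def nth_append q_def p_def)
      also have "\<dots> = pochhammer (- lam - a) i / pochhammer (1 - a) i"
        by (rule kummer_deriv0)
      also have "\<dots> = inverse (pochhammer (1 - a) i) * (Kl ! j) * pochhammer (cl ! j) i"
        using k by (simp add: Kl_def cl_def nth_append q_def p_def divide_inverse mult_ac)
      finally show ?thesis .
    qed
  qed
  have W0: "wronskian fs0 0 = (\<Prod>i<N. inverse (pochhammer (1 - a) i)) * prod_list Kl * vandermonde cl"
  proof -
    have "wronskian fs0 0 = det (mat N N (\<lambda>(i,j). (deriv ^^ i) (fs0 ! j) 0))"
      using wronskian_det[of fs0 0] lenfs by simp
    also have "mat N N (\<lambda>(i,j). (deriv ^^ i) (fs0 ! j) 0) =
        mat N N (\<lambda>(i,j). inverse (pochhammer (1 - a) i) * (Kl ! j) * pochhammer (cl ! j) i)"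
      by (rule eq_matI) (auto simp: entry)
    also have "det \<dots> = (\<Prod>i<N. inverse (pochhammer (1 - a) i)) * (\<Prod>j<N. Kl ! j) *
        det (mat N N (\<lambda>(i,j). pochhammer (cl ! j) i))"
      by (rule det_scale)
    also have "det (mat N N (\<lambda>(i,j). pochhammer (cl ! j) i)) = vandermonde cl"
      unfolding det_poch_vandermonde vandermonde_def lenc ..
    also have "(\<Prod>j<N. Kl ! j) = prod_list Kl"
      using prod_list_nth[of "\<lambda>x. x" Kl] lenK by simp
    finally show ?thesis .
  qed

  define s where "s = split_idx ns r"
  define s' where "s' = split_idx ms r"
  define R where "R = pochhammer (1 - a) r"
  define P1 where "P1 = (\<Prod>k=1..r+1. pochhammer (- a + of_nat k) (r + 1 - k))"
  define P2 where "P2 = (\<Prod>j=1..s'-1. pochhammer (- a + of_nat r + 1) (ms ! (j - 1) - r))"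
  define P3 where "P3 = (\<Prod>i=1..s-1. pochhammer (- a + of_nat r + 1) (ns ! (i - 1) - r))"
  define Q2 where "Q2 = (\<Prod>j=s'..q. pochhammer (- a + 1 + of_nat (ms ! (j - 1))) (r - ms ! (j - 1)))"
  define Q3 where "Q3 = (\<Prod>i=s..p. pochhammer (- a + 1 + of_nat (ns ! (i - 1))) (r - ns ! (i - 1)))"
  define Fm where "Fm = (\<Prod>j<q. fact (ms ! j) :: complex)"
  define Fn where "Fn = (\<Prod>i<p. fact (ns ! i) :: complex)"
  define D' where "D' = vandermonde (map (\<lambda>m. - of_nat m) (rev ms) @ map (\<lambda>n. - a + 1 + of_nat n) ns @ [- lam - a])"
  define Am where "Am = (\<Prod>j<q. pochhammer (1 - a) (ms ! j))"
  define An where "An = (\<Prod>i<p. pochhammer (1 - a) (ns ! i))"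
  define Pi where "Pi = (\<Prod>i<N. pochhammer (1 - a) i)"
  have G0e: "G0_formula \<alpha> lam ns ms = P1 * P2 * P3 * D' / (R * Q2 * Q3 * Fm * Fn)"
    unfolding G0_formula_def Let_def P1_def P2_def P3_def Q2_def Q3_def Fm_def Fn_def D'_def s_def s'_def
      R_def r_def p_def q_def a_def ..
  obtain \<sigma> where \<sigma>: "\<sigma> \<in> {1, -1::complex}" "D' = \<sigma> * vandermonde cl"
  proof -
    let ?xs = "map (\<lambda>m. - of_nat m :: complex) ms"
    let ?ys = "map (\<lambda>n. - a + 1 + of_nat n) ns @ [- lam - a]"
    have e: "D' = vandermonde (rev ?xs @ ?ys)" unfolding D'_def by (simp add: rev_map)
    obtain t where t: "t \<in> {1, -1::complex}" "vandermonde (rev ?xs @ ?ys) = t * vandermonde (?xs @ ?ys)"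
      using vandermonde_rev_prefix[of ?xs ?ys] by blast
    have "D' = t * vandermonde cl" unfolding e t(2) cl_def by simp
    thus ?thesis using that t(1) by blast
  qed
  have spm: "1 \<le> s' \<and> s' \<le> length ms + 1 \<and> (\<forall>i\<in>{s'..length ms}. ms ! (i - 1) < r) \<and> (\<forall>i\<in>{1..<s'}. ms ! (i - 1) \<ge> r)"
    unfolding s'_def by (rule split_idx_props[OF assms(2)])
  have spn: "1 \<le> s \<and> s \<le> length ns + 1 \<and> (\<forall>i\<in>{s..length ns}. ns ! (i - 1) < r) \<and> (\<forall>i\<in>{1..<s}. ns ! (i - 1) \<ge> r)"
    unfolding s_def by (rule split_idx_props[OF assms(1)])
  have Lm: "Am * Q2 = R ^ q * P2"
    using list_poch[of s' ms r a] spm unfolding Am_def Q2_def R_def P2_def q_def by blast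
  have Ln: "An * Q3 = R ^ p * P3"
    using list_poch[of s ns r a] spn unfolding An_def Q3_def R_def P3_def p_def by blast
  have P1e: "P1 * Pi = R ^ N"
    unfolding P1_def Pi_def R_def N_def by (rule P1_lemma)
  have Rnz: "R \<noteq> 0" unfolding R_def by (rule nz)
  have Pinz: "Pi \<noteq> 0" unfolding Pi_def using nz by (simp add: prod_zero_iff)
  have Q2nz: "Q2 \<noteq> 0" unfolding Q2_def using nzall by (simp add: prod_zero_iff algebra_simps)
  have Q3nz: "Q3 \<noteq> 0" unfolding Q3_def using nzall by (simp add: prod_zero_iff algebra_simps)
  have Fmnz: "Fm \<noteq> 0" unfolding Fm_def by (simp add: prod_zero_iff)
  have Fnnz: "Fn \<noteq> 0" unfolding Fn_def by (simp add: prod_zero_iff)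
  have PK: "prod_list Kl = Am / Fm * (An / Fn)"
    unfolding Kl_def Am_def An_def Fm_def Fn_def prod_list.append prod_list_nth
    by (simp add: prod_dividef p_def q_def)
  have Pinv: "(\<Prod>i<N. inverse (pochhammer (1 - a) i)) = inverse Pi"
    unfolding Pi_def using prod_inversef[of "pochhammer (1 - a)" "{..<N}"] by (simp add: comp_def)
  have X: "inverse Pi * (Am / Fm * (An / Fn)) = P1 * P2 * P3 / (R * Q2 * Q3 * Fm * Fn)"
  proof -
    have e1: "inverse Pi = P1 / R ^ N" using P1e Pinz Rnz by (simp add: field_simps)
    have e2: "Am = R ^ q * P2 / Q2" using Lm Q2nz by (simp add: field_simps)
    have e3: "An = R ^ p * P3 / Q3" using Ln Q3nz by (simp add: field_simps)
    have e4: "R ^ N = R ^ q * R ^ p * R" unfolding N_def r_def by (simp add: power_add)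
    show ?thesis unfolding e1 e2 e3 e4 using Rnz Q2nz Q3nz Fmnz Fnnz by (simp add: field_simps)
  qed
  have "wronskian fs0 0 = \<sigma> * G0_formula \<alpha> lam ns ms"
  proof -
    have "G0_formula \<alpha> lam ns ms = (P1 * P2 * P3 / (R * Q2 * Q3 * Fm * Fn)) * D'"
      unfolding G0e by simp
    also have "\<dots> = \<sigma> * wronskian fs0 0"
      unfolding W0 Pinv PK X[symmetric] \<sigma>(2) by (simp add: mult_ac)
    finally have "G0_formula \<alpha> lam ns ms = \<sigma> * wronskian fs0 0" .
    moreover have "\<sigma> * \<sigma> = 1" using \<sigma>(1) by auto
    ultimately show ?thesis by (metis mult.assoc mult_1)
  qed
  thus ?thesis using lim \<sigma>(1) unfolding S_def by auto
qed

end
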